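(* Let $X$ be a pre-ordered Banach space with a closed generating cone. If the dual $X'$, endowed with the dual cone, is a quasi-lattice (a $\upsilon$-quasi-lattice or a $\mu$-quasi-lattice), then there exists $\alpha>0$ such that $X$ is $\alpha$-Ellis-Grosberg-Krein regular.
   Context: A pre-ordered Banach space is a real Banach space $X$ with a cone $X_+$ ($X_++X_+\subseteq X_+$, $\lambda X_+\subseteq X_+$ for $\lambda\ge0$); $x\le y$ means $y-x\in X_+$; generating means $X=X_+-X_+$. The dual cone is $X'_+=\{f\in X': f(X_+)\subseteq[0,\infty)\}$. $X$ is $\alpha$-Ellis-Grosberg-Krein regular if it is $\alpha$-max-normal ($z\le x\le y$ implies $\|x\|\le\alpha\max\{\|y\|,\|z\|\}$) and approximately $\alpha$-sum-conormal (for every $x$ and $\varepsilon>0$ there are $a,b\in X_+$ with $x=a-b$ and $\|a\|+\|b\|<\alpha\|x\|+\varepsilon$). For subsets $A$, $\upsilon(A)$ is the set of upper bounds and $\mu(A)$ the set of minimal upper bounds. With $\sigma_{x,y}(z)=\|z-x\|+\|z-y\|$, a pre-ordered Banach space with closed cone is a $\upsilon$-quasi-lattice (resp. $\mu$-quasi-lattice) if for all $x,y$ the set $\upsilon(\{x,y\})$ (resp. $\mu(\{x,y\})$) is non-empty and contains a unique minimizer of $\sigma_{x,y}$ on it. *)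

theory Defs
  imports "HOL-Analysis.Analysis"
begin

definition is_cone :: "'a::real_vector set \<Rightarrow> bool" where
  "is_cone K \<longleftrightarrow> (\<forall>x\<in>K. \<forall>y\<in>K. x + y \<in> K) \<and> (\<forall>x\<in>K. \<forall>l::real. l \<ge> 0 \<longrightarrow> l *\<^sub>R x \<in> K)"

definition cone_le :: "'a::real_vector set \<Rightarrow> 'a \<Rightarrow> 'a \<Rightarrow> bool" where
  "cone_le K x y \<longleftrightarrow> y - x \<in> K"

definition generating :: "'a::real_vector set \<Rightarrow> bool" where
  "generating K \<longleftrightarrow> (\<forall>x. \<exists>a\<in>K. \<exists>b\<in>K. x = a - b)"

definition dual_cone :: "'a::real_normed_vector set \<Rightarrow> ('a \<Rightarrow>\<^sub>L real) set" where
  "dual_cone K = {f. \<forall>x\<in>K. 0 \<le> blinfun_apply f x}"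

definition max_normal :: "'a::real_normed_vector set \<Rightarrow> real \<Rightarrow> bool" where
  "max_normal K \<alpha> \<longleftrightarrow>
     (\<forall>x y z. cone_le K z x \<and> cone_le K x y \<longrightarrow> norm x \<le> \<alpha> * max (norm y) (norm z))"

definition approx_sum_conormal :: "'a::real_normed_vector set \<Rightarrow> real \<Rightarrow> bool" where
  "approx_sum_conormal K \<alpha> \<longleftrightarrow>
     (\<forall>x. \<forall>\<epsilon>>0. \<exists>a\<in>K. \<exists>b\<in>K. x = a - b \<and> norm a + norm b < \<alpha> * norm x + \<epsilon>)"

definition EGK_regular :: "'a::real_normed_vector set \<Rightarrow> real \<Rightarrow> bool" where
  "EGK_regular K \<alpha> \<longleftrightarrow> max_normal K \<alpha> \<and> approx_sum_conormal K \<alpha>"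

definition upper_bounds :: "'a::real_vector set \<Rightarrow> 'a set \<Rightarrow> 'a set" where
  "upper_bounds K A = {z. \<forall>a\<in>A. cone_le K a z}"

definition minimal_upper_bounds :: "'a::real_vector set \<Rightarrow> 'a set \<Rightarrow> 'a set" where
  "minimal_upper_bounds K A =
     {z \<in> upper_bounds K A. \<forall>w\<in>upper_bounds K A. cone_le K w z \<longrightarrow> cone_le K z w}"

definition sigma_xy :: "'a::real_normed_vector \<Rightarrow> 'a \<Rightarrow> 'a \<Rightarrow> real" where
  "sigma_xy x y z = norm (z - x) + norm (z - y)"

definition unique_minimizer_in :: "('a \<Rightarrow> real) \<Rightarrow> 'a set \<Rightarrow> bool" where
  "unique_minimizer_in f S \<longleftrightarrow> (\<exists>!z. z \<in> S \<and> (\<forall>w\<in>S. f z \<le> f w))"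

definition upsilon_quasi_lattice :: "'a::real_normed_vector set \<Rightarrow> bool" where
  "upsilon_quasi_lattice K \<longleftrightarrow> closed K \<and>
     (\<forall>x y. upper_bounds K {x, y} \<noteq> {} \<and> unique_minimizer_in (sigma_xy x y) (upper_bounds K {x, y}))"

definition mu_quasi_lattice :: "'a::real_normed_vector set \<Rightarrow> bool" where
  "mu_quasi_lattice K \<longleftrightarrow> closed K \<and>
     (\<forall>x y. minimal_upper_bounds K {x, y} \<noteq> {} \<and>
            unique_minimizer_in (sigma_xy x y) (minimal_upper_bounds K {x, y}))"

end

theory Submission
  imports Defs
begin


definition subl :: "('a::real_vector \<Rightarrow> real) \<Rightarrow> bool" where
  "subl q \<longleftrightarrow> (\<forall>u v. q (u + v) \<le> q u + q v) \<and> (\<forall>l\<ge>0. \<forall>v. q (l *\<^sub>R v) = l * q v)"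

lemma subl_zero: "subl q \<Longrightarrow> q 0 = 0"
proof -
  assume "subl q"
  then have "q (0 *\<^sub>R 0) = 0 * q 0" unfolding subl_def by blast
  then show ?thesis by simp
qed

lemma subl_neg: "subl q \<Longrightarrow> - q (- v) \<le> q v"
proof -
  assume q: "subl q"
  have "q (v + - v) \<le> q v + q (- v)" using q unfolding subl_def by blast
  then show ?thesis using subl_zero[OF q] by simp
qed

lemma homog_from_le:
  fixes g :: "'a::real_vector \<Rightarrow> real"
  assumes "\<And>l v. l > 0 \<Longrightarrow> g (l *\<^sub>R v) \<le> l * g v" "g 0 = 0"
  shows "\<forall>l\<ge>0. \<forall>v. g (l *\<^sub>R v) = l * g v"
proof (intro allI impI)
  fix l :: real and v assume l: "l \<ge> 0"
  show "g (l *\<^sub>R v) = l * g v"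
  proof (cases "l = 0")
    case True then show ?thesis using assms(2) by simp
  next
    case False
    then have lp: "l > 0" using l by simp
    have "g v = g ((1/l) *\<^sub>R (l *\<^sub>R v))" using lp by simp
    also have "\<dots> \<le> (1/l) * g (l *\<^sub>R v)" using assms(1)[of "1/l" "l *\<^sub>R v"] lp by simp
    finally have "l * g v \<le> g (l *\<^sub>R v)" using lp by (simp add: field_simps)
    with assms(1)[OF lp, of v] show ?thesis by simp
  qed
qed

definition ext :: "('a::real_vector \<Rightarrow> real) \<Rightarrow> 'a \<Rightarrow> 'a \<Rightarrow> real" where
  "ext q a v = Inf ((\<lambda>t. q (v + t *\<^sub>R a) - t * q a) ` {0..})"

lemma ext_bdd:
  assumes "subl q" shows "bdd_below ((\<lambda>t. q (v + t *\<^sub>R a) - t * q a) ` {0..})"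
proof (rule bdd_belowI2[where m = "- q (- v)"])
  fix t :: real assume "t \<in> {0..}"
  then have t: "t \<ge> 0" by simp
  have "t * q a = q (t *\<^sub>R a)" using assms t unfolding subl_def by simp
  also have "\<dots> = q ((v + t *\<^sub>R a) + (- v))" by simp
  also have "\<dots> \<le> q (v + t *\<^sub>R a) + q (- v)" using assms unfolding subl_def by blast
  finally show "- q (- v) \<le> q (v + t *\<^sub>R a) - t * q a" by simp
qed

lemma ext_le_term:
  assumes "subl q" "t \<ge> 0" shows "ext q a v \<le> q (v + t *\<^sub>R a) - t * q a"
  unfolding ext_def by (rule cInf_lower[OF _ ext_bdd[OF assms(1)]]) (use assms in auto)

lemma ext_ge:
  assumes "\<And>t. t \<ge> 0 \<Longrightarrow> c \<le> q (v + t *\<^sub>R a) - t * q a" shows "c \<le> ext q a v"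
  unfolding ext_def by (rule cInf_greatest) (use assms in auto)

lemma ext_le: "subl q \<Longrightarrow> ext q a v \<le> q v"
  using ext_le_term[of q 0 a v] by simp

lemma ext_neg: "subl q \<Longrightarrow> ext q a (- a) \<le> - q a"
  using ext_le_term[of q 1 a "- a"] subl_zero[of q] by simp

lemma ext_subl:
  assumes q: "subl q" shows "subl (ext q a)"
proof -
  have add: "ext q a (u + v) \<le> ext q a u + ext q a v" for u v
  proof -
    have "ext q a (u + v) - (q (u + t *\<^sub>R a) - t * q a) \<le> ext q a v" if t: "t \<ge> 0" for t
    proof (rule ext_ge)
      fix s :: real assume s: "s \<ge> 0"
      have "ext q a (u + v) \<le> q (u + v + (t + s) *\<^sub>R a) - (t + s) * q a"
        using ext_le_term[OF q, of "t+s"] t s by simp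
      also have "q (u + v + (t + s) *\<^sub>R a) = q ((u + t *\<^sub>R a) + (v + s *\<^sub>R a))"
        by (simp add: algebra_simps)
      also have "\<dots> \<le> q (u + t *\<^sub>R a) + q (v + s *\<^sub>R a)" using q unfolding subl_def by blast
      finally show "ext q a (u + v) - (q (u + t *\<^sub>R a) - t * q a) \<le> q (v + s *\<^sub>R a) - s * q a"
        by (simp add: algebra_simps)
    qed
    then have "ext q a (u + v) - ext q a v \<le> ext q a u"
      by (intro ext_ge) (simp add: algebra_simps)
    then show ?thesis by simp
  qed
  have hom: "ext q a (l *\<^sub>R v) \<le> l * ext q a v" if l: "l > 0" for l v
  proof -
    have "ext q a (l *\<^sub>R v) / l \<le> ext q a v"
    proof (rule ext_ge)
      fix t :: real assume t: "t \<ge> 0"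
      have "ext q a (l *\<^sub>R v) \<le> q (l *\<^sub>R v + (l * t) *\<^sub>R a) - (l * t) * q a"
        using ext_le_term[OF q, of "l*t"] t l by simp
      also have "q (l *\<^sub>R v + (l * t) *\<^sub>R a) = q (l *\<^sub>R (v + t *\<^sub>R a))"
        by (simp add: algebra_simps)
      also have "\<dots> = l * q (v + t *\<^sub>R a)" using q l unfolding subl_def by simp
      finally show "ext q a (l *\<^sub>R v) / l \<le> q (v + t *\<^sub>R a) - t * q a"
        using l by (simp add: field_simps)
    qed
    then show ?thesis using l by (simp add: field_simps)
  qed
  have z: "ext q a 0 = 0"
  proof (rule antisym)
    show "ext q a 0 \<le> 0" using ext_le[OF q, of a 0] subl_zero[OF q] by simp
    show "0 \<le> ext q a 0"
      by (rule ext_ge) (use q in \<open>simp add: subl_def\<close>)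
  qed
  show ?thesis unfolding subl_def using add homog_from_le[of "ext q a", OF hom z] by blast
qed


lemma chain_inf_subl:
  fixes C :: "('a::real_normed_vector \<Rightarrow> real) set"
  assumes C: "C \<noteq> {}" "\<And>q. q \<in> C \<Longrightarrow> subl q \<and> (\<forall>v. q v \<le> norm v)"
    and ch: "\<And>q1 q2. q1 \<in> C \<Longrightarrow> q2 \<in> C \<Longrightarrow> (\<forall>v. q1 v \<le> q2 v) \<or> (\<forall>v. q2 v \<le> q1 v)"
  shows "subl (\<lambda>v. Inf ((\<lambda>q. q v) ` C))" (is "subl ?u")
proof -
  have bdd: "bdd_below ((\<lambda>q. q v) ` C)" for v
  proof (rule bdd_belowI2[where m = "- norm v"])
    fix q assume "q \<in> C"
    then have "subl q" "q (- v) \<le> norm (- v)" using C(2) by blast+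
    then show "- norm v \<le> q v" using subl_neg[of q v] by simp
  qed
  have low: "?u v \<le> q v" if "q \<in> C" for q v
    by (rule cInf_lower[OF _ bdd]) (use that in auto)
  have great: "c \<le> ?u v" if "\<And>q. q \<in> C \<Longrightarrow> c \<le> q v" for c v
    by (rule cInf_greatest) (use C that in auto)
  have add: "?u (x + y) \<le> ?u x + ?u y" for x y
  proof -
    have "?u (x + y) - q1 x \<le> ?u y" if q1: "q1 \<in> C" for q1
    proof (rule great)
      fix q2 assume q2: "q2 \<in> C"
      show "?u (x + y) - q1 x \<le> q2 y"
      proof (cases "\<forall>v. q1 v \<le> q2 v")
        case True
        have "?u (x + y) \<le> q1 (x + y)" using low q1 by blast
        also have "\<dots> \<le> q1 x + q1 y" using C(2)[OF q1] unfolding subl_def by blast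
        finally show ?thesis using True by (smt (verit))
      next
        case False
        then have le: "\<forall>v. q2 v \<le> q1 v" using ch[OF q1 q2] by blast
        have "?u (x + y) \<le> q2 (x + y)" using low q2 by blast
        also have "\<dots> \<le> q2 x + q2 y" using C(2)[OF q2] unfolding subl_def by blast
        finally show ?thesis using le by (smt (verit))
      qed
    qed
    then have "?u (x + y) - ?u y \<le> ?u x" by (intro great) (smt (verit))
    then show ?thesis by simp
  qed
  have hom: "?u (l *\<^sub>R v) \<le> l * ?u v" if l: "l > 0" for l v
  proof -
    have "?u (l *\<^sub>R v) / l \<le> ?u v"
    proof (rule great)
      fix q assume q: "q \<in> C"
      have "?u (l *\<^sub>R v) \<le> q (l *\<^sub>R v)" using low q by blast
      also have "\<dots> = l * q v" using C(2)[OF q] l unfolding subl_def by simp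
      finally show "?u (l *\<^sub>R v) / l \<le> q v" using l by (simp add: field_simps)
    qed
    then show ?thesis using l by (simp add: field_simps)
  qed
  have z: "?u 0 = 0"
  proof -
    have "(\<lambda>q. q 0) ` C = {0}" using C subl_zero by fastforce
    then show ?thesis by simp
  qed
  show ?thesis unfolding subl_def using add homog_from_le[of ?u, OF hom z] by blast
qed

lemma minimal_linear:
  assumes m: "subl m" and min: "\<And>a. ext m a = m"
  shows "m (u + v) = m u + m v" "m (l *\<^sub>R v) = l * m v"
proof -
  have neg: "m (- a) = - m a" for a
  proof -
    have "m (- a) \<le> - m a" using ext_neg[OF m, of a] min[of a] by simp
    moreover have "- m a \<le> m (- a)" using subl_neg[OF m, of "- a"] by simp
    ultimately show ?thesis by simp
  qed
  show "m (u + v) = m u + m v"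
  proof -
    have "m (u + v) \<le> m u + m v" using m unfolding subl_def by blast
    moreover have "m (- u + - v) \<le> m (- u) + m (- v)" using m unfolding subl_def by blast
    then have "- m (u + v) \<le> - m u - m v" using neg[of "u+v"] neg[of u] neg[of v] by (simp add: algebra_simps)
    ultimately show ?thesis by simp
  qed
  show "m (l *\<^sub>R v) = l * m v"
  proof (cases "l \<ge> 0")
    case True then show ?thesis using m unfolding subl_def by blast
  next
    case False
    have h: "\<forall>l\<ge>0. \<forall>v. m (l *\<^sub>R v) = l * m v" using m subl_def by blast
    have hh: "m ((- l) *\<^sub>R v) = (- l) * m v" by (rule h[rule_format]) (use False in simp)
    have "m (l *\<^sub>R v) = - m ((- l) *\<^sub>R v)" using neg[of "(- l) *\<^sub>R v"] by simp
    also have "\<dots> = - ((- l) * m v)" by (simp only: hh)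
    finally show ?thesis by simp
  qed
qed

lemma hahn_banach_norm:
  fixes x0 :: "'a::real_normed_vector"
  shows "\<exists>f::'a \<Rightarrow>\<^sub>L real. norm f \<le> 1 \<and> blinfun_apply f x0 = norm x0"
proof -
  have sn: "subl (norm :: 'a \<Rightarrow> real)" unfolding subl_def by (simp add: norm_triangle_ineq)
  define q0 where "q0 = ext norm x0"
  have sq0: "subl q0" unfolding q0_def by (rule ext_subl[OF sn])
  define P where "P = {q. subl q \<and> (\<forall>v. q v \<le> q0 v)}"
  define r where "r = {(q1, q2). q1 \<in> P \<and> q2 \<in> P \<and> (\<forall>v. q2 v \<le> q1 v)}"
  have Fr: "Field r = P" unfolding r_def Field_def by auto
  have rs: "r \<subseteq> P \<times> P" unfolding r_def by auto
  have rf: "refl_on P r" unfolding refl_on_def r_def by auto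
  have tr: "trans r" unfolding trans_def r_def by clarsimp (meson order_trans)
  have an: "antisym r" unfolding antisym_def r_def fun_eq_iff by (auto intro: order.antisym)
  have po: "Partial_order r"
    unfolding Fr partial_order_on_def preorder_on_def using rs rf tr an by blast
  have q0n: "q0 v \<le> norm v" for v unfolding q0_def using ext_le[OF sn] .
  have "\<exists>u\<in>Field r. \<forall>a\<in>C. (a, u) \<in> r" if C: "C \<in> Chains r" for C
  proof (cases "C = {}")
    case True then show ?thesis using sq0 by (auto simp: Fr P_def)
  next
    case False
    have CP: "q \<in> P" if "q \<in> C" for q using C that unfolding Chains_def r_def by blast
    define u where "u = (\<lambda>v. Inf ((\<lambda>q. q v) ` C))"
    have su: "subl u" unfolding u_def
    proof (rule chain_inf_subl[OF False])
      fix q assume "q \<in> C" then show "subl q \<and> (\<forall>v. q v \<le> norm v)"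
      proof -
        have "q \<in> P" using CP \<open>q \<in> C\<close> by blast
        then have "subl q" "\<And>v. q v \<le> q0 v" unfolding P_def by auto
        then show ?thesis using q0n by (meson order_trans)
      qed
    next
      fix q1 q2 assume "q1 \<in> C" "q2 \<in> C"
      then show "(\<forall>v. q1 v \<le> q2 v) \<or> (\<forall>v. q2 v \<le> q1 v)" using C unfolding Chains_def r_def by blast
    qed
    have bdd: "bdd_below ((\<lambda>q. q v) ` C)" for v
    proof (rule bdd_belowI2[where m = "- norm v"])
      fix q assume "q \<in> C"
      then have qP: "q \<in> P" using CP by blast
      then have h1: "q (- v) \<le> q0 (- v)" unfolding P_def by blast
      have "q (- v) \<le> norm (- v)" using h1 q0n[of "- v"] by linarith
      moreover have "subl q" using qP unfolding P_def by blast
      ultimately have "subl q" "q (- v) \<le> norm (- v)" by auto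
      then show "- norm v \<le> q v" using subl_neg[of q v] by simp
    qed
    have low: "u v \<le> q v" if "q \<in> C" for q v unfolding u_def
      by (rule cInf_lower[OF _ bdd]) (use that in auto)
    obtain q1 where q1: "q1 \<in> C" using False by blast
    have "u v \<le> q0 v" for v
    proof -
      have "u v \<le> q1 v" by (rule low[OF q1])
      also have "q1 v \<le> q0 v" using CP[OF q1] unfolding P_def by blast
      finally show ?thesis .
    qed
    then have uP: "u \<in> P" unfolding P_def using su by blast
    then have "\<forall>a\<in>C. (a, u) \<in> r" using low CP unfolding r_def by auto
    then show ?thesis using uP Fr by blast
  qed
  from Zorns_po_lemma[OF po this] obtain m where mP: "m \<in> P" and
    mmin: "\<And>a. a \<in> P \<Longrightarrow> (m, a) \<in> r \<Longrightarrow> a = m" unfolding Fr by blast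
  have sm: "subl m" using mP P_def by blast
  have "ext m a = m" for a
  proof (rule mmin)
    have "ext m a v \<le> q0 v" for v
    proof -
      have "ext m a v \<le> m v" by (rule ext_le[OF sm])
      also have "m v \<le> q0 v" using mP unfolding P_def by blast
      finally show ?thesis .
    qed
    then show "ext m a \<in> P" using ext_subl[OF sm] unfolding P_def by blast
    then show "(m, ext m a) \<in> r" using mP ext_le[OF sm] unfolding r_def by auto
  qed
  note lin = minimal_linear[OF sm this]
  have mle: "m v \<le> norm v" for v
  proof -
    have "m v \<le> q0 v" using mP unfolding P_def by blast
    then show ?thesis using q0n[of v] by linarith
  qed
  have mabs: "norm (m v) \<le> norm v * 1" for v
    using mle[of v] mle[of "- v"] lin(2)[of "-1" v] by auto
  have bl: "bounded_linear m" by (rule bounded_linear_intro[OF lin(1) _ mabs]) (simp add: lin(2))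
  define f where "f = Blinfun m"
  have fa: "blinfun_apply f = m" unfolding f_def by (rule bounded_linear_Blinfun_apply[OF bl])
  have "norm f \<le> 1" by (rule norm_blinfun_bound) (use mabs fa in auto)
  moreover have "m x0 = norm x0"
  proof -
    have "m (- x0) \<le> q0 (- x0)" using mP unfolding P_def by blast
    also have "\<dots> \<le> - norm x0" unfolding q0_def by (rule ext_neg[OF sn])
    finally have "norm x0 \<le> m x0" using lin(2)[of "-1" x0] by simp
    then show ?thesis using mle[of x0] by simp
  qed
  ultimately show ?thesis using fa by auto
qed



definition Sset :: "'a::real_normed_vector set \<Rightarrow> real \<Rightarrow> 'a set" where
  "Sset K c = {a - b | a b. a \<in> K \<and> b \<in> K \<and> norm a \<le> c \<and> norm b \<le> c}"

lemma cone_zero: "is_cone K \<Longrightarrow> K \<noteq> {} \<Longrightarrow> 0 \<in> K"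
proof -
  assume K: "is_cone K" "K \<noteq> {}"
  then obtain x where "x \<in> K" by blast
  then have "0 *\<^sub>R x \<in> K" using K(1) unfolding is_cone_def by blast
  then show ?thesis by simp
qed

lemma cone_sum: "is_cone K \<Longrightarrow> 0 \<in> K \<Longrightarrow> (\<And>i. i \<in> A \<Longrightarrow> f i \<in> K) \<Longrightarrow> sum f A \<in> K"
proof (induction A rule: infinite_finite_induct)
  case (insert x F) then show ?case unfolding is_cone_def by simp
qed auto

lemma Sset_mono: "c \<le> d \<Longrightarrow> Sset K c \<subseteq> Sset K d"
  unfolding Sset_def by force

lemma Sset_diff:
  assumes "is_cone K" "u \<in> closure (Sset K c)" "v \<in> closure (Sset K c)"
  shows "u - v \<in> closure (Sset K (2 * c))"
  unfolding closure_approachable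
proof (intro allI impI)
  fix e :: real assume e: "e > 0"
  obtain u' where u': "u' \<in> Sset K c" "dist u' u < e/2" using assms(2) e
    unfolding closure_approachable by (meson half_gt_zero)
  obtain v' where v': "v' \<in> Sset K c" "dist v' v < e/2" using assms(3) e
    unfolding closure_approachable by (meson half_gt_zero)
  obtain a1 b1 where 1: "u' = a1 - b1" "a1 \<in> K" "b1 \<in> K" "norm a1 \<le> c" "norm b1 \<le> c"
    using u'(1) unfolding Sset_def by blast
  obtain a2 b2 where 2: "v' = a2 - b2" "a2 \<in> K" "b2 \<in> K" "norm a2 \<le> c" "norm b2 \<le> c"
    using v'(1) unfolding Sset_def by blast
  have "u' - v' = (a1 + b2) - (b1 + a2)" using 1 2 by simp
  moreover have "a1 + b2 \<in> K" "b1 + a2 \<in> K" using 1 2 assms(1) unfolding is_cone_def by auto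
  moreover have "norm (a1 + b2) \<le> 2 * c" "norm (b1 + a2) \<le> 2 * c"
    using 1 2 norm_triangle_ineq[of a1 b2] norm_triangle_ineq[of b1 a2] by auto
  ultimately have "u' - v' \<in> Sset K (2 * c)" unfolding Sset_def by blast
  moreover have "dist (u' - v') (u - v) < e"
    using u'(2) v'(2) dist_triangle_add[of u' "- v'" u "- v"] by (simp add: dist_norm algebra_simps norm_minus_commute)
  ultimately show "\<exists>y\<in>Sset K (2 * c). dist y (u - v) < e" by blast
qed

lemma baire_step:
  fixes K :: "'a::banach set"
  assumes "is_cone K" "generating K"
  shows "\<exists>c>0. \<exists>r>0. \<forall>z. norm z < r \<longrightarrow> z \<in> closure (Sset K c)"
proof -
  define G where "G = range (\<lambda>n::nat. closure (Sset K (real n)))"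
  have UG: "\<Union>G = UNIV"
  proof -
    have "x \<in> \<Union>G" for x
    proof -
      obtain a b where ab: "a \<in> K" "b \<in> K" "x = a - b" using assms(2) unfolding generating_def by blast
      obtain n :: nat where "max (norm a) (norm b) \<le> real n" using real_arch_simple by blast
      then have "x \<in> Sset K (real n)" unfolding Sset_def using ab by auto
      then show ?thesis unfolding G_def using closure_subset by blast
    qed
    then show ?thesis by blast
  qed
  have "\<exists>T\<in>G. interior T \<noteq> {}"
  proof (rule ccontr)
    assume "\<not> ?thesis"
    then have "euclidean interior_of \<Union>G = {}"
      by (intro Baire_category_alt) (auto simp: completely_metrizable_space_euclidean G_def closed_closedin[symmetric])
    then show False using UG by simp
  qed
  then obtain n :: nat where "interior (closure (Sset K (real n))) \<noteq> {}" unfolding G_def by blast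
  then obtain y where y: "y \<in> interior (closure (Sset K (real n)))" by blast
  then obtain r where r0: "r > 0" "ball y r \<subseteq> interior (closure (Sset K (real n)))"
    using open_interior open_contains_ball by blast
  then have r: "r > 0" "ball y r \<subseteq> closure (Sset K (real n))"
    using interior_subset by blast+
  have "z \<in> closure (Sset K (2 * real n + 1))" if "norm z < r" for z
  proof -
    have "y + z \<in> closure (Sset K (real n))" "y \<in> closure (Sset K (real n))"
      using r that by (auto simp: dist_norm)
    from Sset_diff[OF assms(1) this] have "z \<in> closure (Sset K (2 * real n))" by simp
    moreover have "closure (Sset K (2 * real n)) \<subseteq> closure (Sset K (2 * real n + 1))"
      by (intro closure_mono Sset_mono) simp
    ultimately show ?thesis by blast
  qed
  then show ?thesis using r(1) by (intro exI[of _ "2 * real n + 1"]) auto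
qed

lemma approx_step:
  fixes K :: "'a::banach set"
  assumes K: "is_cone K" "generating K"
  shows "\<exists>M>0. \<forall>z e. e > 0 \<longrightarrow> (\<exists>a\<in>K. \<exists>b\<in>K. norm a \<le> M * norm z \<and> norm b \<le> M * norm z \<and> norm (z - (a - b)) < e)"
proof -
  have K0: "0 \<in> K" using K cone_zero unfolding generating_def by blast
  obtain c r where cr: "c > 0" "r > 0" "\<And>z. norm z < r \<Longrightarrow> z \<in> closure (Sset K c)"
    using baire_step[OF K] by blast
  define M where "M = 2 * c / r"
  have "\<exists>a\<in>K. \<exists>b\<in>K. norm a \<le> M * norm z \<and> norm b \<le> M * norm z \<and> norm (z - (a - b)) < e"
    if e: "e > 0" for z e
  proof (cases "z = 0")
    case True then show ?thesis using K0 e by (intro bexI[of _ 0]) auto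
  next
    case False
    then have nz: "norm z > 0" by simp
    define s where "s = r / (2 * norm z)"
    have s: "s > 0" using nz cr unfolding s_def by simp
    have "norm (s *\<^sub>R z) = r / 2" unfolding s_def using nz cr(2) by simp
    then have "s *\<^sub>R z \<in> closure (Sset K c)" using cr by simp
    then obtain w where w: "w \<in> Sset K c" "dist w (s *\<^sub>R z) < e * s"
      unfolding closure_approachable using e s by (meson mult_pos_pos)
    obtain a b where ab: "w = a - b" "a \<in> K" "b \<in> K" "norm a \<le> c" "norm b \<le> c"
      using w(1) unfolding Sset_def by blast
    have Mz: "c / s = M * norm z" unfolding M_def s_def using nz cr by (simp add: field_simps)
    have "(1/s) *\<^sub>R a \<in> K" "(1/s) *\<^sub>R b \<in> K" using K(1) ab s unfolding is_cone_def by auto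
    moreover have "norm ((1/s) *\<^sub>R a) \<le> M * norm z" "norm ((1/s) *\<^sub>R b) \<le> M * norm z"
      using ab s Mz by (auto simp: field_simps)
    moreover have "norm (z - ((1/s) *\<^sub>R a - (1/s) *\<^sub>R b)) < e"
    proof -
      have eq: "z - ((1/s) *\<^sub>R a - (1/s) *\<^sub>R b) = (1/s) *\<^sub>R (s *\<^sub>R z - w)"
        unfolding ab(1) using s by (simp add: scaleR_diff_right)
      have lt: "norm (s *\<^sub>R z - w) < e * s" using w(2) by (simp add: dist_norm norm_minus_commute)
      have "norm ((1/s) *\<^sub>R (s *\<^sub>R z - w)) = norm (s *\<^sub>R z - w) / s" using s by simp
      also have "\<dots> < e" using lt s by (simp add: field_simps)
      finally show ?thesis unfolding eq .
    qed
    ultimately show ?thesis by blast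
  qed
  moreover have "M > 0" unfolding M_def using cr by simp
  ultimately show ?thesis by blast
qed


lemma conormal_bound:
  fixes K :: "'a::banach set"
  assumes K: "is_cone K" "closed K" "generating K"
  shows "\<exists>\<beta>>0. \<forall>x. \<exists>a\<in>K. \<exists>b\<in>K. x = a - b \<and> norm a + norm b \<le> \<beta> * norm x"
proof -
  have K0: "0 \<in> K" using K cone_zero unfolding generating_def by blast
  obtain M where M: "M > 0" and Mp: "\<And>z e. e > 0 \<Longrightarrow> \<exists>a\<in>K. \<exists>b\<in>K. norm a \<le> M * norm z \<and> norm b \<le> M * norm z \<and> norm (z - (a - b)) < e"
    using approx_step[OF K(1) K(3)] by blast
  have "\<forall>z. \<forall>e. \<exists>p. e > 0 \<longrightarrow> (fst p \<in> K \<and> snd p \<in> K \<and> norm (fst p) \<le> M * norm z \<and> norm (snd p) \<le> M * norm z \<and> norm (z - (fst p - snd p)) < e)"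
  proof (intro allI)
    fix z e
    show "\<exists>p. e > 0 \<longrightarrow> (fst p \<in> K \<and> snd p \<in> K \<and> norm (fst p) \<le> M * norm z \<and> norm (snd p) \<le> M * norm z \<and> norm (z - (fst p - snd p)) < e)"
    proof (cases "e > 0")
      case True
      then obtain a b where "a \<in> K" "b \<in> K" "norm a \<le> M * norm z" "norm b \<le> M * norm z" "norm (z - (a - b)) < e"
        using Mp by blast
      then show ?thesis by (intro exI[of _ "(a, b)"]) simp
    qed simp
  qed
  then obtain F where F: "\<And>z e. e > 0 \<Longrightarrow> fst (F z e) \<in> K \<and> snd (F z e) \<in> K \<and> norm (fst (F z e)) \<le> M * norm z \<and> norm (snd (F z e)) \<le> M * norm z \<and> norm (z - (fst (F z e) - snd (F z e))) < e"
    unfolding choice_iff by blast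
  have "\<exists>a\<in>K. \<exists>b\<in>K. x = a - b \<and> norm a + norm b \<le> (4 * M) * norm x" for x
  proof (cases "x = 0")
    case True then show ?thesis using K0 by auto
  next
    case False
    then have nx: "norm x > 0" by simp
    define \<epsilon> where "\<epsilon> = (\<lambda>k::nat. norm x / 2 ^ Suc k)"
    have \<epsilon>p: "\<epsilon> k > 0" for k unfolding \<epsilon>_def using nx by simp
    define xs where "xs = rec_nat x (\<lambda>k y. y - (fst (F y (\<epsilon> k)) - snd (F y (\<epsilon> k))))"
    define A where "A = (\<lambda>k. fst (F (xs k) (\<epsilon> k)))"
    define B where "B = (\<lambda>k. snd (F (xs k) (\<epsilon> k)))"
    have xs0: "xs 0 = x" unfolding xs_def by simp
    have xsS: "xs (Suc k) = xs k - (A k - B k)" for k unfolding xs_def A_def B_def by simp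
    have AK: "A k \<in> K" and BK: "B k \<in> K" and nA: "norm (A k) \<le> M * norm (xs k)"
      and nB: "norm (B k) \<le> M * norm (xs k)" and nS: "norm (xs (Suc k)) < \<epsilon> k" for k
      using F[OF \<epsilon>p[of k], of "xs k"] unfolding A_def B_def xsS by (simp_all add: A_def B_def)
    have nxs: "norm (xs k) \<le> norm x * (1/2) ^ k" for k
    proof (cases k)
      case 0 then show ?thesis using xs0 by simp
    next
      case (Suc j) then show ?thesis using nS[of j] unfolding \<epsilon>_def by (simp add: field_simps power_divide)
    qed
    define g where "g = (\<lambda>k::nat. M * norm x * (1/2) ^ k)"
    have sg: "summable g" unfolding g_def by (intro summable_mult summable_geometric) simp
    have sumg: "suminf g = 2 * M * norm x" unfolding g_def
      by (subst suminf_mult) (simp_all add: suminf_geometric)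
    have gA: "norm (A k) \<le> g k" and gB: "norm (B k) \<le> g k" for k
    proof -
      have "M * norm (xs k) \<le> M * (norm x * (1/2) ^ k)" using nxs[of k] M by (intro mult_left_mono) auto
      then show "norm (A k) \<le> g k" "norm (B k) \<le> g k" using nA[of k] nB[of k] unfolding g_def by (simp_all add: mult.assoc)
    qed
    have sA: "summable A" by (rule summable_comparison_test[OF _ sg]) (use gA in auto)
    have sB: "summable B" by (rule summable_comparison_test[OF _ sg]) (use gB in auto)
    define a where "a = suminf A"
    define b where "b = suminf B"
    have partial: "(\<Sum>k<n. A k - B k) = x - xs n" for n
      by (induction n) (simp_all add: xs0 xsS)
    have "xs \<longlonglongrightarrow> 0"
    proof (rule Lim_null_comparison)
      show "\<forall>\<^sub>F n in sequentially. norm (xs n) \<le> norm x * (1/2) ^ n" using nxs by simp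
      show "(\<lambda>n. norm x * (1/2::real) ^ n) \<longlonglongrightarrow> 0"
        by (intro tendsto_mult_right_zero LIMSEQ_power_zero) simp
    qed
    then have "(\<lambda>n. x - xs n) \<longlonglongrightarrow> x - 0" by (intro tendsto_intros)
    then have "(\<lambda>k. A k - B k) sums x" unfolding sums_def partial by simp
    moreover have "(\<lambda>k. A k - B k) sums (a - b)" unfolding a_def b_def
      using sA sB by (intro sums_diff summable_sums)
    ultimately have xab: "x = a - b" by (rule sums_unique2)
    have aK: "a \<in> K" unfolding a_def
      by (rule closed_sequentially[OF K(2) _ summable_LIMSEQ[OF sA]]) (simp add: cone_sum[OF K(1) K0] AK)
    have bK: "b \<in> K" unfolding b_def
      by (rule closed_sequentially[OF K(2) _ summable_LIMSEQ[OF sB]]) (simp add: cone_sum[OF K(1) K0] BK)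
    have "norm a \<le> suminf g" unfolding a_def by (rule norm_suminf_le[OF gA sg])
    moreover have "norm b \<le> suminf g" unfolding b_def by (rule norm_suminf_le[OF gB sg])
    ultimately have "norm a + norm b \<le> (4 * M) * norm x" using sumg by simp
    then show ?thesis using aK bK xab by blast
  qed
  then show ?thesis using M by (intro exI[of _ "4 * M"]) auto
qed


theorem corollary6p5:
  fixes K :: "'a::banach set"
  assumes "is_cone K" and "closed K" and "generating K"
    and "upsilon_quasi_lattice (dual_cone K) \<or> mu_quasi_lattice (dual_cone K)"
  shows "\<exists>\<alpha>>0. EGK_regular K \<alpha>"
proof -
  let ?D = "dual_cone K"
  have coneD: "is_cone ?D" unfolding is_cone_def dual_cone_def
    by (auto simp: blinfun.add_left blinfun.scaleR_left)
  have "?D = (\<Inter>x\<in>K. {f. 0 \<le> blinfun_apply f x})" unfolding dual_cone_def by auto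
  moreover have "closed {f::'a \<Rightarrow>\<^sub>L real. 0 \<le> blinfun_apply f x}" for x
    by (intro closed_Collect_le continuous_intros)
  ultimately have closedD: "closed ?D" by (simp add: closed_INT)
  have ub: "upper_bounds ?D {f, g} \<noteq> {}" for f g
    using assms(4) unfolding upsilon_quasi_lattice_def mu_quasi_lattice_def minimal_upper_bounds_def
    by blast
  have genD: "generating ?D" unfolding generating_def
  proof
    fix f :: "'a \<Rightarrow>\<^sub>L real"
    obtain h where "h \<in> upper_bounds ?D {f, - f}" using ub by blast
    then have h1: "h - f \<in> ?D" and h2: "h + f \<in> ?D" unfolding upper_bounds_def cone_le_def by auto
    have "(1/2) *\<^sub>R (h + f) \<in> ?D" "(1/2) *\<^sub>R (h - f) \<in> ?D" using coneD h1 h2 unfolding is_cone_def by auto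
    moreover have "f = (1/2) *\<^sub>R (h + f) - (1/2) *\<^sub>R (h - f)"
      by (simp add: algebra_simps flip: scaleR_add_left)
    ultimately show "\<exists>a\<in>?D. \<exists>b\<in>?D. f = a - b" by blast
  qed
  obtain \<beta> where \<beta>: "\<beta> > 0" and decD: "\<And>f. \<exists>p\<in>?D. \<exists>q\<in>?D. f = p - q \<and> norm p + norm q \<le> \<beta> * norm f"
    using conormal_bound[OF coneD closedD genD] by blast
  obtain \<gamma> where \<gamma>: "\<gamma> > 0" and decK: "\<And>x. \<exists>a\<in>K. \<exists>b\<in>K. x = a - b \<and> norm a + norm b \<le> \<gamma> * norm x"
    using conormal_bound[OF assms(1-3)] by blast
  define \<alpha> where "\<alpha> = max \<beta> \<gamma>"
  have mn: "max_normal K \<alpha>" unfolding max_normal_def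
  proof (intro allI impI)
    fix x y z assume "cone_le K z x \<and> cone_le K x y"
    then have xz: "x - z \<in> K" and yx: "y - x \<in> K" unfolding cone_le_def by auto
    obtain f :: "'a \<Rightarrow>\<^sub>L real" where f: "norm f \<le> 1" "blinfun_apply f x = norm x"
      using hahn_banach_norm by blast
    obtain p q where pq: "p \<in> ?D" "q \<in> ?D" "f = p - q" "norm p + norm q \<le> \<beta> * norm f"
      using decD by blast
    have "norm x = blinfun_apply p x - blinfun_apply q x" using f(2) pq(3) by (simp add: blinfun.diff_left)
    moreover have "blinfun_apply p x \<le> blinfun_apply p y"
      using pq(1) yx unfolding dual_cone_def by (force simp: blinfun.diff_right)
    moreover have "blinfun_apply q z \<le> blinfun_apply q x"
      using pq(2) xz unfolding dual_cone_def by (force simp: blinfun.diff_right)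
    moreover have "blinfun_apply p y \<le> norm p * norm y"
      using norm_blinfun[of p y] by simp
    moreover have "- blinfun_apply q z \<le> norm q * norm z"
      using norm_blinfun[of q z] by simp
    moreover have "norm p * norm y \<le> norm p * max (norm y) (norm z)" by (simp add: mult_left_mono)
    moreover have "norm q * norm z \<le> norm q * max (norm y) (norm z)" by (simp add: mult_left_mono)
    moreover have "(norm p + norm q) * max (norm y) (norm z) \<le> \<alpha> * max (norm y) (norm z)"
    proof (rule mult_right_mono)
      have "\<beta> * norm f \<le> \<beta>" using f(1) \<beta> by (simp add: mult_left_le)
      then show "norm p + norm q \<le> \<alpha>" using pq(4) unfolding \<alpha>_def by linarith
    qed (simp add: le_max_iff_disj)
    ultimately show "norm x \<le> \<alpha> * max (norm y) (norm z)" by (simp add: algebra_simps)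
  qed
  have ac: "approx_sum_conormal K \<alpha>" unfolding approx_sum_conormal_def
  proof (intro allI impI)
    fix x :: 'a and \<epsilon> :: real assume e: "\<epsilon> > 0"
    obtain a b where ab: "a \<in> K" "b \<in> K" "x = a - b" "norm a + norm b \<le> \<gamma> * norm x" using decK by blast
    have "\<gamma> * norm x \<le> \<alpha> * norm x" unfolding \<alpha>_def by (simp add: mult_right_mono)
    then show "\<exists>a\<in>K. \<exists>b\<in>K. x = a - b \<and> norm a + norm b < \<alpha> * norm x + \<epsilon>"
      using ab e by (intro bexI[of _ a] bexI[of _ b]) auto
  qed
  have "\<alpha> > 0" unfolding \<alpha>_def using \<beta> by simp
  then show ?thesis using mn ac unfolding EGK_regular_def by blast
qed

end
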